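(* Let $G=(V,E)$ be the bipartite graph with $V=\{v_1,\dots,v_{10}\}$ and the 14 edges $\{v_1,v_6\},\{v_1,v_7\},\{v_2,v_6\},\{v_2,v_7\},\{v_2,v_8\},\{v_3,v_7\},\{v_3,v_9\},\{v_3,v_{10}\},\{v_4,v_8\},\{v_4,v_9\},\{v_4,v_{10}\},\{v_5,v_8\},\{v_5,v_9\},\{v_5,v_{10}\}$, and let $R=\{\{v_2,v_7\},\{v_4,v_9\},\{v_5,v_{10}\}\}$. Let $y\in\mathbb{R}^E$ be given by $y_{\{v_1,v_6\}}=\frac23$ and $y_e=\frac13$ for all other $e\in E$. Then $y$ is not a convex combination of incidence vectors of perfect matchings $M$ of $G$ with $|M\cap R|$ odd, i.e., $y\notin P_{(G,R)}$.
   Context: $P_{(G,R)}=\operatorname{conv}\{\chi^M\colon M \text{ a perfect matching of } G,\ |M\cap R| \text{ odd}\}$. *)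

theory Defs
  imports Complex_Main
begin

text \<open>Vertices v_1..v_10 are represented by the natural numbers 1..10;
  an edge {v_i,v_j} is the two-element set {i,j}.\<close>

definition V18 :: "nat set" where
  "V18 = {1..10}"

definition E18 :: "nat set set" where
  "E18 = {{1,6},{1,7},{2,6},{2,7},{2,8},{3,7},{3,9},{3,10},
          {4,8},{4,9},{4,10},{5,8},{5,9},{5,10}}"

definition R18 :: "nat set set" where
  "R18 = {{2,7},{4,9},{5,10}}"

definition perfect_matching :: "'v set \<Rightarrow> 'v set set \<Rightarrow> 'v set set \<Rightarrow> bool" where
  "perfect_matching V E M \<longleftrightarrow> M \<subseteq> E \<and> (\<forall>v\<in>V. \<exists>!e. e \<in> M \<and> v \<in> e)"

definition incidence :: "'v set set \<Rightarrow> 'v set \<Rightarrow> real" where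
  "incidence M = (\<lambda>e. if e \<in> M then 1 else 0)"

text \<open>Convex hull of a set of vectors in R^E, given by convex combinations, where
  two vectors are identified when they agree on all coordinates e in E.\<close>
definition conv_on :: "'e set \<Rightarrow> ('e \<Rightarrow> real) set \<Rightarrow> ('e \<Rightarrow> real) set" where
  "conv_on E S = {y. \<exists>F u. finite F \<and> F \<subseteq> S \<and> F \<noteq> {} \<and> (\<forall>x\<in>F. u x \<ge> 0) \<and> sum u F = 1
                        \<and> (\<forall>e\<in>E. y e = (\<Sum>x\<in>F. u x * x e))}"

definition P_GR :: "'v set \<Rightarrow> 'v set set \<Rightarrow> 'v set set \<Rightarrow> ('v set \<Rightarrow> real) set" where
  "P_GR V E R = conv_on E {incidence M | M. perfect_matching V E M \<and> odd (card (M \<inter> R))}"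

definition y18 :: "nat set \<Rightarrow> real" where
  "y18 e = (if e = {1,6} then 2/3 else 1/3)"

end

theory Submission
  imports Defs
begin

lemma key:
  assumes pm: "perfect_matching V18 E18 M" and odd: "odd (card (M \<inter> R18))"
    and h16: "{1,6} \<in> M"
  shows "{2,7} \<in> M"
proof (rule ccontr)
  assume n27: "{2,7} \<notin> M"
  have sub: "M \<subseteq> E18" and cov: "\<And>v. v \<in> V18 \<Longrightarrow> \<exists>!e. e \<in> M \<and> v \<in> e"
    using pm unfolding perfect_matching_def by auto
  have uniq: "\<And>v e e'. v \<in> V18 \<Longrightarrow> e \<in> M \<Longrightarrow> e' \<in> M \<Longrightarrow> v \<in> e \<Longrightarrow> v \<in> e' \<Longrightarrow> e = e'"
    using cov by blast
  have ex: "\<And>v. v \<in> V18 \<Longrightarrow> \<exists>e\<in>M. v \<in> e" using cov by blast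
  have n26: "{2,6} \<notin> M" using uniq[of 6 "{1,6}" "{2,6}"] h16 by (auto simp: V18_def doubleton_eq_iff)
  have n17: "{1,7} \<notin> M" using uniq[of 1 "{1,6}" "{1,7}"] h16 by (auto simp: V18_def doubleton_eq_iff)
  obtain e2 where e2: "e2 \<in> M" "2 \<in> e2" using ex[of 2] by (auto simp: V18_def doubleton_eq_iff)
  have "e2 \<in> E18" using e2 sub by auto
  hence "e2 = {2,6} \<or> e2 = {2,7} \<or> e2 = {2,8}" using e2(2) unfolding E18_def by auto
  hence h28: "{2,8} \<in> M" using e2 n26 n27 by auto
  have n48: "{4,8} \<notin> M" using uniq[of 8 "{2,8}" "{4,8}"] h28 by (auto simp: V18_def doubleton_eq_iff)
  have n58: "{5,8} \<notin> M" using uniq[of 8 "{2,8}" "{5,8}"] h28 by (auto simp: V18_def doubleton_eq_iff)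
  obtain e7 where e7: "e7 \<in> M" "7 \<in> e7" using ex[of 7] by (auto simp: V18_def doubleton_eq_iff)
  have "e7 \<in> E18" using e7 sub by auto
  hence "e7 = {1,7} \<or> e7 = {2,7} \<or> e7 = {3,7}" using e7(2) unfolding E18_def by auto
  hence h37: "{3,7} \<in> M" using e7 n17 n27 by auto
  have n39: "{3,9} \<notin> M" using uniq[of 3 "{3,7}" "{3,9}"] h37 by (auto simp: V18_def doubleton_eq_iff)
  have n310: "{3,10} \<notin> M" using uniq[of 3 "{3,7}" "{3,10}"] h37 by (auto simp: V18_def doubleton_eq_iff)
  obtain e4 where e4: "e4 \<in> M" "4 \<in> e4" using ex[of 4] by (auto simp: V18_def doubleton_eq_iff)
  have "e4 \<in> E18" using e4 sub by auto
  hence "e4 = {4,8} \<or> e4 = {4,9} \<or> e4 = {4,10}" using e4(2) unfolding E18_def by auto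
  hence c4: "{4,9} \<in> M \<or> {4,10} \<in> M" using e4 n48 by auto
  obtain e5 where e5: "e5 \<in> M" "5 \<in> e5" using ex[of 5] by (auto simp: V18_def doubleton_eq_iff)
  have "e5 \<in> E18" using e5 sub by auto
  hence c5: "e5 = {5,8} \<or> e5 = {5,9} \<or> e5 = {5,10}" using e5(2) unfolding E18_def by auto
  show False
  proof (cases "{4,9} \<in> M")
    case True
    have n59: "{5,9} \<notin> M" using uniq[of 9 "{4,9}" "{5,9}"] True by (auto simp: V18_def doubleton_eq_iff)
    have "{5,10} \<in> M" using c5 e5 n58 n59 by auto
    hence "M \<inter> R18 = {{4,9},{5,10}}" using True n27 unfolding R18_def by auto
    hence "card (M \<inter> R18) = 2" by (simp add: doubleton_eq_iff)
    thus False using odd by simp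
  next
    case False
    hence h410: "{4,10} \<in> M" using c4 by auto
    have n510: "{5,10} \<notin> M" using uniq[of 10 "{4,10}" "{5,10}"] h410 by (auto simp: V18_def doubleton_eq_iff)
    hence "M \<inter> R18 = {}" using False n27 unfolding R18_def by auto
    thus False using odd by simp
  qed
qed

theorem lemma18:
  shows "y18 \<notin> P_GR V18 E18 R18"
proof
  assume "y18 \<in> P_GR V18 E18 R18"
  then obtain F u where F: "finite F" "F \<subseteq> {incidence M | M. perfect_matching V18 E18 M \<and> odd (card (M \<inter> R18))}"
    "\<forall>x\<in>F. u x \<ge> 0" "\<forall>e\<in>E18. y18 e = (\<Sum>x\<in>F. u x * x e)"
    unfolding P_GR_def conv_on_def by blast
  have le: "x {1,6} \<le> x {2,7}" if "x \<in> F" for x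
  proof -
    obtain M where M: "x = incidence M" "perfect_matching V18 E18 M" "odd (card (M \<inter> R18))"
      using F(2) \<open>x \<in> F\<close> by blast
    show ?thesis using key[OF M(2,3)] M(1) unfolding incidence_def by auto
  qed
  have "(\<Sum>x\<in>F. u x * x {1,6}) \<le> (\<Sum>x\<in>F. u x * x {2,7})"
    by (rule sum_mono) (use le F(3) in \<open>simp add: mult_left_mono\<close>)
  moreover have "y18 {1,6} = (\<Sum>x\<in>F. u x * x {1,6})" "y18 {2,7} = (\<Sum>x\<in>F. u x * x {2,7})"
    using F(4) unfolding E18_def by auto
  moreover have "y18 {1,6} = 2/3" "y18 {2,7} = 1/3" unfolding y18_def by (auto simp: doubleton_eq_iff)
  ultimately show False by simp
qed

end
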